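(* Let $\rho$ be a density operator on $\mathbb{C}^3$. If the KD distribution $K_\rho(x,y)$ of $(J^{(1)}_1,J^{(1)}_2)$ is real-valued (all coefficients of the delta functions are real), then $\langle J^{(1)}_3\rangle_\rho:=\mathrm{Tr}[J^{(1)}_3\rho]=0$.
   Context: Spin-1 matrices: $J^{(1)}_1=\frac{1}{\sqrt2}\begin{pmatrix}0&1&0\\1&0&1\\0&1&0\end{pmatrix}$, $J^{(1)}_2=\frac{1}{\sqrt2}\begin{pmatrix}0&-i&0\\i&0&-i\\0&i&0\end{pmatrix}$, $J^{(1)}_3=\begin{pmatrix}1&0&0\\0&0&0\\0&0&-1\end{pmatrix}$. A density operator is a positive semidefinite trace-one operator. Kirkwood–Dirac (KD) distribution: for Hermitian operators $A_1,\dots,A_n$ on $\mathbb{C}^N$ and a density operator $\rho$, define $\#^{K}_{A_1,\dots,A_n}(x)=(2\pi)^{-n}\int_{\mathbb{R}^n} e^{-is_1A_1}\cdots e^{-is_nA_n}\,e^{i s\cdot x}\,d^ns$ (inverse Fourier transform in the distributional sense), and $K^{A_1,\dots,A_n}_\rho(x)=\mathrm{Tr}[\#^{K}_{A_1,\dots,A_n}(x)\,\rho]$; for this pair it is a finite linear combination of $\delta(x-\alpha)\delta(y-\beta)$. *)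

theory Defs
  imports "Jordan_Normal_Form.Schur_Decomposition"
begin

definition J1 :: "complex mat" where
  "J1 = (1 / complex_of_real (sqrt 2)) \<cdot>\<^sub>m
     mat 3 3 (\<lambda>(i,j). if (i = 0 \<and> j = 1) \<or> (i = 1 \<and> j = 0) \<or> (i = 1 \<and> j = 2) \<or> (i = 2 \<and> j = 1)
                      then 1 else 0)"

definition J2 :: "complex mat" where
  "J2 = (1 / complex_of_real (sqrt 2)) \<cdot>\<^sub>m
     mat 3 3 (\<lambda>(i,j). if (i = 0 \<and> j = 1) \<or> (i = 1 \<and> j = 2) then - \<i>
                      else if (i = 1 \<and> j = 0) \<or> (i = 2 \<and> j = 1) then \<i> else 0)"

definition J3 :: "complex mat" where
  "J3 = mat 3 3 (\<lambda>(i,j). if i = 0 \<and> j = 0 then 1 else if i = 2 \<and> j = 2 then -1 else 0)"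

definition mtrace :: "complex mat \<Rightarrow> complex" where
  "mtrace A = (\<Sum>i<dim_row A. A $$ (i, i))"

definition density_operator :: "nat \<Rightarrow> complex mat \<Rightarrow> bool" where
  "density_operator n \<rho> \<longleftrightarrow> \<rho> \<in> carrier_mat n n \<and> mat_adjoint \<rho> = \<rho> \<and>
     (\<forall>v \<in> carrier_vec n. Im (v \<bullet>c (\<rho> *\<^sub>v v)) = 0 \<and> Re (v \<bullet>c (\<rho> *\<^sub>v v)) \<ge> 0) \<and>
     mtrace \<rho> = 1"

text \<open>Spectral projection of a Hermitian n x n matrix A for the value a: the orthogonal
  projection onto the eigenspace ker (A - a I) (the zero matrix if a is not an eigenvalue).\<close>
definition eig_proj :: "nat \<Rightarrow> complex mat \<Rightarrow> complex \<Rightarrow> complex mat" where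
  "eig_proj n A a = (THE P. P \<in> carrier_mat n n \<and> mat_adjoint P = P \<and> P * P = P \<and>
     (\<forall>v \<in> carrier_vec n. (\<exists>w \<in> carrier_vec n. v = P *\<^sub>v w) \<longleftrightarrow> A *\<^sub>v v = a \<cdot>\<^sub>v v))"

text \<open>Since exp(-i s1 A1) exp(-i s2 A2) = sum over (alpha,beta) of exp(-i(s1 alpha + s2 beta)) P_alpha Q_beta,
  the KD quasi-distribution is K(x,y) = sum over (alpha,beta) of Tr[P_alpha Q_beta rho] delta(x-alpha) delta(y-beta).
  kd_coeff gives the coefficient of delta(x-alpha) delta(y-beta) (zero off the joint spectrum).\<close>
definition kd_coeff :: "nat \<Rightarrow> complex mat \<Rightarrow> complex mat \<Rightarrow> complex mat \<Rightarrow> real \<Rightarrow> real \<Rightarrow> complex" where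
  "kd_coeff n A B \<rho> \<alpha> \<beta> = mtrace (eig_proj n A (of_real \<alpha>) * eig_proj n B (of_real \<beta>) * \<rho>)"

end

theory Submission
  imports Defs
begin



lemma adj_idx: assumes "A \<in> carrier_mat n n" "i < n" "j < n"
  shows "mat_adjoint A $$ (i,j) = cnj (A $$ (j,i))"
  using assms unfolding mat_adjoint_def by (simp add: mat_of_rows_index)

lemma adj_carrier: assumes "A \<in> carrier_mat n n" shows "mat_adjoint A \<in> carrier_mat n n"
  using assms unfolding mat_adjoint_def by auto

lemma proj_range_mult:
  fixes P Q :: "complex mat" assumes P: "P \<in> carrier_mat n n" and Q: "Q \<in> carrier_mat n n" and QQ: "Q * Q = Q"
    and hP: "\<forall>v \<in> carrier_vec n. (\<exists>w \<in> carrier_vec n. v = P *\<^sub>v w) \<longleftrightarrow> A *\<^sub>v v = a \<cdot>\<^sub>v v"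
    and hQ: "\<forall>v \<in> carrier_vec n. (\<exists>w \<in> carrier_vec n. v = Q *\<^sub>v w) \<longleftrightarrow> A *\<^sub>v v = a \<cdot>\<^sub>v v"
  shows "Q * P = P"
proof (rule mat_col_eqI)
  fix j assume j: "j < dim_col P"
  hence jn: "j < n" using P by auto
  have c: "col P j = P *\<^sub>v unit_vec n j"
    by (rule eq_vecI, insert P jn, auto)
  have "col P j \<in> carrier_vec n" using P by auto
  moreover have "\<exists>w \<in> carrier_vec n. col P j = P *\<^sub>v w" using c by auto
  ultimately obtain w where w: "w \<in> carrier_vec n" "col P j = Q *\<^sub>v w" using hP hQ by blast
  have "col (Q * P) j = Q *\<^sub>v col P j" by (rule col_mult2[OF Q P jn])
  also have "\<dots> = (Q * Q) *\<^sub>v w" using w Q by simp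
  also have "\<dots> = col P j" using QQ w by simp
  finally show "col (Q * P) j = col P j" .
qed (insert P Q, auto)

lemma herm_eq:
  fixes P Q :: "complex mat" assumes P: "P \<in> carrier_mat n n" and Q: "Q \<in> carrier_mat n n"
   and aP: "mat_adjoint P = P" and aQ: "mat_adjoint Q = Q"
   and QP: "Q * P = P" and PQ: "P * Q = Q"
  shows "P = Q"
proof (rule eq_matI)
  fix i j assume "i < dim_row Q" "j < dim_col Q"
  hence i: "i < n" and j: "j < n" using Q by auto
  have "P $$ (i,j) = cnj (P $$ (j,i))" using adj_idx[OF P i j] aP by simp
  also have "\<dots> = cnj ((Q * P) $$ (j,i))" using QP by simp
  also have "\<dots> = cnj (\<Sum>k<n. Q $$ (j,k) * P $$ (k,i))"
    using P Q i j by (simp add: scalar_prod_def lessThan_atLeast0)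
  also have "\<dots> = (\<Sum>k<n. cnj (Q $$ (j,k)) * cnj (P $$ (k,i)))"
    by (simp add: cnj_sum)
  also have "\<dots> = (\<Sum>k<n. P $$ (i,k) * Q $$ (k,j))"
  proof (rule sum.cong[OF refl])
    fix k assume "k \<in> {..<n}" hence k: "k < n" by auto
    have "cnj (Q $$ (j,k)) = Q $$ (k,j)" using adj_idx[OF Q k j] aQ by simp
    moreover have "cnj (P $$ (k,i)) = P $$ (i,k)" using adj_idx[OF P i k] aP by simp
    ultimately show "cnj (Q $$ (j,k)) * cnj (P $$ (k,i)) = P $$ (i,k) * Q $$ (k,j)" by simp
  qed
  also have "\<dots> = (P * Q) $$ (i,j)"
    using P Q i j by (simp add: scalar_prod_def lessThan_atLeast0)
  also have "\<dots> = Q $$ (i,j)" using PQ by simp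
  finally show "P $$ (i,j) = Q $$ (i,j)" .
qed (insert P Q, auto)

lemma eig_proj_eq:
  fixes P :: "complex mat" assumes P: "P \<in> carrier_mat n n" and aP: "mat_adjoint P = P" and PP: "P * P = P"
    and hP: "\<forall>v \<in> carrier_vec n. (\<exists>w \<in> carrier_vec n. v = P *\<^sub>v w) \<longleftrightarrow> A *\<^sub>v v = a \<cdot>\<^sub>v v"
  shows "eig_proj n A a = P"
  unfolding eig_proj_def
proof (rule the_equality)
  show "P \<in> carrier_mat n n \<and> mat_adjoint P = P \<and> P * P = P \<and>
     (\<forall>v \<in> carrier_vec n. (\<exists>w \<in> carrier_vec n. v = P *\<^sub>v w) \<longleftrightarrow> A *\<^sub>v v = a \<cdot>\<^sub>v v)"
    using assms by blast
  fix Q assume "Q \<in> carrier_mat n n \<and> mat_adjoint Q = Q \<and> Q * Q = Q \<and>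
     (\<forall>v \<in> carrier_vec n. (\<exists>w \<in> carrier_vec n. v = Q *\<^sub>v w) \<longleftrightarrow> A *\<^sub>v v = a \<cdot>\<^sub>v v)"
  hence Q: "Q \<in> carrier_mat n n" "mat_adjoint Q = Q" "Q * Q = Q"
    "\<forall>v \<in> carrier_vec n. (\<exists>w \<in> carrier_vec n. v = Q *\<^sub>v w) \<longleftrightarrow> A *\<^sub>v v = a \<cdot>\<^sub>v v" by auto
  have "Q * P = P" by (rule proj_range_mult[OF P Q(1) Q(3) hP Q(4)])
  moreover have "P * Q = Q" by (rule proj_range_mult[OF Q(1) P PP Q(4) hP])
  ultimately show "Q = P" using herm_eq[OF Q(1) P Q(2) aP] by simp
qed


definition sq :: complex where "sq = complex_of_real (sqrt 2)"
lemma sq_sq: "sq * sq = 2" unfolding sq_def of_real_mult[symmetric] by simp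
lemma sq_sq2: "sq * (sq * x) = 2 * x" by (simp add: mult.assoc[symmetric] sq_sq)
lemma sq_nz: "sq \<noteq> 0" using sq_sq by auto
lemma inv_sq: "1 / sq = sq / 2" using sq_sq sq_nz by (simp add: field_simps)

definition M3 :: "complex list list \<Rightarrow> complex mat" where "M3 xs = mat 3 3 (\<lambda>(i,j). xs!i!j)"
lemma M3_carrier[simp]: "M3 xs \<in> carrier_mat 3 3" unfolding M3_def by simp
lemma M3_dims[simp]: "dim_row (M3 xs) = 3" "dim_col (M3 xs) = 3" unfolding M3_def by simp_all
lemma M3_idx[simp]: "i < 3 \<Longrightarrow> j < 3 \<Longrightarrow> M3 xs $$ (i,j) = xs!i!j" unfolding M3_def by simp

lemma M3_mult_carrier[simp]: "M3 a * M3 b \<in> carrier_mat 3 3"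
  by (rule mult_carrier_mat[of _ 3 3]) simp_all
lemma M3_mv_carrier[simp]: "M3 a *\<^sub>v v \<in> carrier_vec 3"
  by (rule carrier_vecI) simp
lemma less3: "(i::nat) < 3 \<longleftrightarrow> i = 0 \<or> i = 1 \<or> i = 2" by auto
lemma sum3: "(\<Sum>k\<in>{0..<3::nat}. f k) = f 0 + f 1 + (f 2 :: complex)" by (simp add: numeral_3_eq_3 eval_nat_numeral)
lemma sum3': "(\<Sum>k<3::nat. f k) = f 0 + f 1 + (f 2 :: complex)" by (simp add: numeral_3_eq_3 eval_nat_numeral)

lemma mult3: fixes A B :: "complex mat" shows "A \<in> carrier_mat 3 3 \<Longrightarrow> B \<in> carrier_mat 3 3 \<Longrightarrow> i < 3 \<Longrightarrow> j < 3 \<Longrightarrow>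
  (A * B) $$ (i,j) = A $$ (i,0) * B $$ (0,j) + A $$ (i,1) * B $$ (1,j) + A $$ (i,2) * B $$ (2,j)"
  using sum3[of "\<lambda>k. A$$(i,k)*B$$(k,j)"] by (simp add: scalar_prod_def)
lemma multv3: fixes A :: "complex mat" shows "A \<in> carrier_mat 3 3 \<Longrightarrow> v \<in> carrier_vec 3 \<Longrightarrow> i < 3 \<Longrightarrow>
  (A *\<^sub>v v) $ i = A $$ (i,0) * v $ 0 + A $$ (i,1) * v $ 1 + A $$ (i,2) * v $ 2"
  using sum3[of "\<lambda>k. A$$(i,k)*v$k"] by (simp add: scalar_prod_def)

lemma mat3_eqI: "A \<in> carrier_mat 3 3 \<Longrightarrow> B \<in> carrier_mat 3 3 \<Longrightarrow>
  (\<And>i j. i < 3 \<Longrightarrow> j < 3 \<Longrightarrow> A $$ (i,j) = B $$ (i,j)) \<Longrightarrow> A = B" by auto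
lemma vec3_eqI: "v \<in> carrier_vec 3 \<Longrightarrow> w \<in> carrier_vec 3 \<Longrightarrow>
  v $ 0 = w $ 0 \<Longrightarrow> v $ 1 = w $ 1 \<Longrightarrow> v $ 2 = w $ 2 \<Longrightarrow> v = w"
  by (rule eq_vecI, auto simp: less3)

abbreviation "h \<equiv> sq / 2"
lemma J1_M3: "J1 = M3 [[0,h,0],[h,0,h],[0,h,0]]"
  unfolding J1_def sq_def[symmetric] by (rule mat3_eqI) (auto simp: less3 inv_sq)
lemma J2_M3: "J2 = M3 [[0,-\<i>*h,0],[\<i>*h,0,-\<i>*h],[0,\<i>*h,0]]"
  unfolding J2_def sq_def[symmetric] by (rule mat3_eqI) (auto simp: less3 inv_sq)


lemma cnj_sq[simp]: "cnj sq = sq" unfolding sq_def by simp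

lemma smult_mv3: fixes P :: "complex mat" assumes "P \<in> carrier_mat 3 3" "w \<in> carrier_vec 3"
  shows "(a \<cdot>\<^sub>m P) *\<^sub>v w = a \<cdot>\<^sub>v (P *\<^sub>v w)"
  by (rule eq_vecI, insert assms, auto)

lemma range_char3:
  fixes A P :: "complex mat"
  assumes A: "A \<in> carrier_mat 3 3" and P: "P \<in> carrier_mat 3 3" and AP: "A * P = a \<cdot>\<^sub>m P"
    and ev: "\<And>v. v \<in> carrier_vec 3 \<Longrightarrow> A *\<^sub>v v = a \<cdot>\<^sub>v v \<Longrightarrow> P *\<^sub>v v = v"
  shows "\<forall>v \<in> carrier_vec 3. (\<exists>w \<in> carrier_vec 3. v = P *\<^sub>v w) \<longleftrightarrow> A *\<^sub>v v = a \<cdot>\<^sub>v v"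
proof (intro ballI iffI)
  fix v :: "complex vec" assume v: "v \<in> carrier_vec 3"
  { assume "\<exists>w \<in> carrier_vec 3. v = P *\<^sub>v w"
    then obtain w where w: "w \<in> carrier_vec 3" "v = P *\<^sub>v w" by blast
    have "A *\<^sub>v v = (A * P) *\<^sub>v w" using w A P by simp
    also have "\<dots> = a \<cdot>\<^sub>v v" using AP smult_mv3[OF P w(1)] w by simp
    finally show "A *\<^sub>v v = a \<cdot>\<^sub>v v" . }
  { assume "A *\<^sub>v v = a \<cdot>\<^sub>v v"
    hence "P *\<^sub>v v = v" using ev v by blast
    thus "\<exists>w \<in> carrier_vec 3. v = P *\<^sub>v w" using v by metis }
qed

lemma herm3: fixes P :: "complex mat" assumes "P \<in> carrier_mat 3 3"
  "\<And>i j. i < 3 \<Longrightarrow> j < 3 \<Longrightarrow> cnj (P $$ (j,i)) = P $$ (i,j)"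
  shows "mat_adjoint P = P"
  by (rule mat3_eqI, insert assms, auto simp: adj_carrier adj_idx)



definition "Pp = M3 [[1/4, sq/4, 1/4],[sq/4,1/2,sq/4],[1/4,sq/4,1/4]]"

lemma Pp_eig: "eig_proj 3 J1 (1) = Pp"
proof (rule eig_proj_eq)
  show "Pp \<in> carrier_mat 3 3" unfolding Pp_def by simp
  show "mat_adjoint Pp = Pp" unfolding Pp_def by (rule herm3, simp, auto simp: less3)
  show "Pp * Pp = Pp" unfolding Pp_def
    by (rule mat3_eqI, simp, simp, auto simp: less3 mult3 field_simps sq_sq sq_sq2 simp del: index_mult_mat)
  show "\<forall>v \<in> carrier_vec 3. (\<exists>w \<in> carrier_vec 3. v = Pp *\<^sub>v w) \<longleftrightarrow> J1 *\<^sub>v v = (1) \<cdot>\<^sub>v v"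
  proof (rule range_char3)
    show "J1 \<in> carrier_mat 3 3" "Pp \<in> carrier_mat 3 3" unfolding J1_M3 Pp_def by simp_all
    show "J1 * Pp = (1) \<cdot>\<^sub>m Pp" unfolding J1_M3 Pp_def
      by (rule mat3_eqI, simp, simp, auto simp: less3 mult3 field_simps sq_sq sq_sq2 simp del: index_mult_mat)
    fix v :: "complex vec" assume v: "v \<in> carrier_vec 3" and e: "J1 *\<^sub>v v = (1) \<cdot>\<^sub>v v"
    have c0: "(J1 *\<^sub>v v)$0 = h * v$1" using v unfolding J1_M3 by (simp add: multv3 del: index_mult_mat_vec)
    have c2: "(J1 *\<^sub>v v)$2 = h * v$1" using v unfolding J1_M3 by (simp add: multv3 del: index_mult_mat_vec)
    have f0: "(J1 *\<^sub>v v)$0 = (1) * v$0" using v by (simp add: e)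
    have f2: "(J1 *\<^sub>v v)$2 = (1) * v$2" using v by (simp add: e)
    have e0: "v$0 = h * v$1" using c0 f0 by (simp add: field_simps minus_equation_iff)
    have e2: "v$2 = h * v$1" using c2 f2 by (simp add: field_simps minus_equation_iff)
    show "Pp *\<^sub>v v = v" unfolding Pp_def
      by (rule vec3_eqI, insert v, auto simp: multv3 e0 e2 field_simps sq_sq sq_sq2 simp del: index_mult_mat_vec)
  qed
qed

definition "Pm = M3 [[1/4, -sq/4, 1/4],[-sq/4,1/2,-sq/4],[1/4,-sq/4,1/4]]"

lemma Pm_eig: "eig_proj 3 J1 (-1) = Pm"
proof (rule eig_proj_eq)
  show "Pm \<in> carrier_mat 3 3" unfolding Pm_def by simp
  show "mat_adjoint Pm = Pm" unfolding Pm_def by (rule herm3, simp, auto simp: less3)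
  show "Pm * Pm = Pm" unfolding Pm_def
    by (rule mat3_eqI, simp, simp, auto simp: less3 mult3 field_simps sq_sq sq_sq2 simp del: index_mult_mat)
  show "\<forall>v \<in> carrier_vec 3. (\<exists>w \<in> carrier_vec 3. v = Pm *\<^sub>v w) \<longleftrightarrow> J1 *\<^sub>v v = (-1) \<cdot>\<^sub>v v"
  proof (rule range_char3)
    show "J1 \<in> carrier_mat 3 3" "Pm \<in> carrier_mat 3 3" unfolding J1_M3 Pm_def by simp_all
    show "J1 * Pm = (-1) \<cdot>\<^sub>m Pm" unfolding J1_M3 Pm_def
      by (rule mat3_eqI, simp, simp, auto simp: less3 mult3 field_simps sq_sq sq_sq2 simp del: index_mult_mat)
    fix v :: "complex vec" assume v: "v \<in> carrier_vec 3" and e: "J1 *\<^sub>v v = (-1) \<cdot>\<^sub>v v"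
    have c0: "(J1 *\<^sub>v v)$0 = h * v$1" using v unfolding J1_M3 by (simp add: multv3 del: index_mult_mat_vec)
    have c2: "(J1 *\<^sub>v v)$2 = h * v$1" using v unfolding J1_M3 by (simp add: multv3 del: index_mult_mat_vec)
    have f0: "(J1 *\<^sub>v v)$0 = (-1) * v$0" using v by (simp add: e)
    have f2: "(J1 *\<^sub>v v)$2 = (-1) * v$2" using v by (simp add: e)
    have e0: "v$0 = - (h * v$1)" using c0 f0 by (simp add: field_simps minus_equation_iff)
    have e2: "v$2 = - (h * v$1)" using c2 f2 by (simp add: field_simps minus_equation_iff)
    show "Pm *\<^sub>v v = v" unfolding Pm_def
      by (rule vec3_eqI, insert v, auto simp: multv3 e0 e2 field_simps sq_sq sq_sq2 simp del: index_mult_mat_vec)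
  qed
qed

definition "Qp = M3 [[1/4, -\<i>*sq/4, -1/4],[\<i>*sq/4,1/2,-\<i>*sq/4],[-1/4,\<i>*sq/4,1/4]]"

lemma Qp_eig: "eig_proj 3 J2 (1) = Qp"
proof (rule eig_proj_eq)
  show "Qp \<in> carrier_mat 3 3" unfolding Qp_def by simp
  show "mat_adjoint Qp = Qp" unfolding Qp_def by (rule herm3, simp, auto simp: less3)
  show "Qp * Qp = Qp" unfolding Qp_def
    by (rule mat3_eqI, simp, simp, auto simp: less3 mult3 field_simps sq_sq sq_sq2 simp del: index_mult_mat)
  show "\<forall>v \<in> carrier_vec 3. (\<exists>w \<in> carrier_vec 3. v = Qp *\<^sub>v w) \<longleftrightarrow> J2 *\<^sub>v v = (1) \<cdot>\<^sub>v v"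
  proof (rule range_char3)
    show "J2 \<in> carrier_mat 3 3" "Qp \<in> carrier_mat 3 3" unfolding J2_M3 Qp_def by simp_all
    show "J2 * Qp = (1) \<cdot>\<^sub>m Qp" unfolding J2_M3 Qp_def
      by (rule mat3_eqI, simp, simp, auto simp: less3 mult3 field_simps sq_sq sq_sq2 simp del: index_mult_mat)
    fix v :: "complex vec" assume v: "v \<in> carrier_vec 3" and e: "J2 *\<^sub>v v = (1) \<cdot>\<^sub>v v"
    have c0: "(J2 *\<^sub>v v)$0 = - (\<i> * h * v$1)" using v unfolding J2_M3 by (simp add: multv3 del: index_mult_mat_vec)
    have c2: "(J2 *\<^sub>v v)$2 = \<i> * h * v$1" using v unfolding J2_M3 by (simp add: multv3 del: index_mult_mat_vec)
    have f0: "(J2 *\<^sub>v v)$0 = (1) * v$0" using v by (simp add: e)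
    have f2: "(J2 *\<^sub>v v)$2 = (1) * v$2" using v by (simp add: e)
    have e0: "v$0 = - (\<i> * h * v$1)" using c0 f0 by (simp add: field_simps minus_equation_iff)
    have e2: "v$2 = \<i> * h * v$1" using c2 f2 by (simp add: field_simps minus_equation_iff)
    show "Qp *\<^sub>v v = v" unfolding Qp_def
      by (rule vec3_eqI, insert v, auto simp: multv3 e0 e2 field_simps sq_sq sq_sq2 simp del: index_mult_mat_vec)
  qed
qed

definition "Qm = M3 [[1/4, \<i>*sq/4, -1/4],[-\<i>*sq/4,1/2,\<i>*sq/4],[-1/4,-\<i>*sq/4,1/4]]"

lemma Qm_eig: "eig_proj 3 J2 (-1) = Qm"
proof (rule eig_proj_eq)
  show "Qm \<in> carrier_mat 3 3" unfolding Qm_def by simp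
  show "mat_adjoint Qm = Qm" unfolding Qm_def by (rule herm3, simp, auto simp: less3)
  show "Qm * Qm = Qm" unfolding Qm_def
    by (rule mat3_eqI, simp, simp, auto simp: less3 mult3 field_simps sq_sq sq_sq2 simp del: index_mult_mat)
  show "\<forall>v \<in> carrier_vec 3. (\<exists>w \<in> carrier_vec 3. v = Qm *\<^sub>v w) \<longleftrightarrow> J2 *\<^sub>v v = (-1) \<cdot>\<^sub>v v"
  proof (rule range_char3)
    show "J2 \<in> carrier_mat 3 3" "Qm \<in> carrier_mat 3 3" unfolding J2_M3 Qm_def by simp_all
    show "J2 * Qm = (-1) \<cdot>\<^sub>m Qm" unfolding J2_M3 Qm_def
      by (rule mat3_eqI, simp, simp, auto simp: less3 mult3 field_simps sq_sq sq_sq2 simp del: index_mult_mat)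
    fix v :: "complex vec" assume v: "v \<in> carrier_vec 3" and e: "J2 *\<^sub>v v = (-1) \<cdot>\<^sub>v v"
    have c0: "(J2 *\<^sub>v v)$0 = - (\<i> * h * v$1)" using v unfolding J2_M3 by (simp add: multv3 del: index_mult_mat_vec)
    have c2: "(J2 *\<^sub>v v)$2 = \<i> * h * v$1" using v unfolding J2_M3 by (simp add: multv3 del: index_mult_mat_vec)
    have f0: "(J2 *\<^sub>v v)$0 = (-1) * v$0" using v by (simp add: e)
    have f2: "(J2 *\<^sub>v v)$2 = (-1) * v$2" using v by (simp add: e)
    have e0: "v$0 = \<i> * h * v$1" using c0 f0 by (simp add: field_simps minus_equation_iff)
    have e2: "v$2 = - (\<i> * h * v$1)" using c2 f2 by (simp add: field_simps minus_equation_iff)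
    show "Qm *\<^sub>v v = v" unfolding Qm_def
      by (rule vec3_eqI, insert v, auto simp: multv3 e0 e2 field_simps sq_sq sq_sq2 simp del: index_mult_mat_vec)
  qed
qed


lemma J3_M3: "J3 = M3 [[1,0,0],[0,0,0],[0,0,-1]]"
  unfolding J3_def by (rule mat3_eqI) (auto simp: less3)

lemma cnj_parts: "cnj a = b \<Longrightarrow> Re b = Re a \<and> Im b = - Im a" by auto

lemma trace3: fixes A B C :: "complex mat"
  assumes "A \<in> carrier_mat 3 3" "B \<in> carrier_mat 3 3" "C \<in> carrier_mat 3 3"
  shows "mtrace (A * B * C) = (\<Sum>i<3::nat. (A*B) $$ (i,0) * C $$ (0,i) + (A*B) $$ (i,1) * C $$ (1,i) + (A*B) $$ (i,2) * C $$ (2,i))"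
proof -
  have AB: "A * B \<in> carrier_mat 3 3" using assms by auto
  have d: "dim_row (A * B * C) = 3" using assms(1) by (simp add: carrier_matD)
  show ?thesis unfolding mtrace_def d
    by (rule sum.cong[OF refl], rule mult3[OF AB assms(3)], auto)
qed

theorem proposition8:
  fixes \<rho> :: "complex mat"
  assumes "density_operator 3 \<rho>"
    and "\<forall>\<alpha> \<beta> :: real. Im (kd_coeff 3 J1 J2 \<rho> \<alpha> \<beta>) = 0"
  shows "mtrace (J3 * \<rho>) = 0"
proof -
  from assms(1) have R: "\<rho> \<in> carrier_mat 3 3" and adj: "mat_adjoint \<rho> = \<rho>"
    unfolding density_operator_def by auto
  have herm: "cnj (\<rho> $$ (j,i)) = \<rho> $$ (i,j)" if "i < 3" "j < 3" for i j
    using adj_idx[OF R that] adj by simp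
  have k1: "Im (mtrace (Pp * Qp * \<rho>)) = 0" using assms(2)[rule_format, of 1 1]
    unfolding kd_coeff_def by (simp add: Pp_eig Qp_eig)
  have k2: "Im (mtrace (Pp * Qm * \<rho>)) = 0" using assms(2)[rule_format, of 1 "-1"]
    unfolding kd_coeff_def by (simp add: Pp_eig Qm_eig)
  have k3: "Im (mtrace (Pm * Qp * \<rho>)) = 0" using assms(2)[rule_format, of "-1" 1]
    unfolding kd_coeff_def by (simp add: Pm_eig Qp_eig)
  have k4: "Im (mtrace (Pm * Qm * \<rho>)) = 0" using assms(2)[rule_format, of "-1" "-1"]
    unfolding kd_coeff_def by (simp add: Pm_eig Qm_eig)
  have hm: "Re (\<rho>$$(i,j)) = Re (\<rho>$$(j,i)) \<and> Im (\<rho>$$(i,j)) = - Im (\<rho>$$(j,i))" if "i < 3" "j < 3" for i j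
    using cnj_parts[OF herm[OF that]] by simp
  have H: "Im (\<rho>$$(0,0)) = 0" "Im (\<rho>$$(1,1)) = 0" "Im (\<rho>$$(2,2)) = 0"
    "Re (\<rho>$$(0,1)) = Re (\<rho>$$(1,0))" "Im (\<rho>$$(0,1)) = - Im (\<rho>$$(1,0))"
    "Re (\<rho>$$(0,2)) = Re (\<rho>$$(2,0))" "Im (\<rho>$$(0,2)) = - Im (\<rho>$$(2,0))"
    "Re (\<rho>$$(1,2)) = Re (\<rho>$$(2,1))" "Im (\<rho>$$(1,2)) = - Im (\<rho>$$(2,1))"
    using hm[of 0 0] hm[of 1 1] hm[of 2 2] hm[of 0 1] hm[of 0 2] hm[of 1 2] by auto
  have carr: "Pp \<in> carrier_mat 3 3" "Pm \<in> carrier_mat 3 3" "Qp \<in> carrier_mat 3 3" "Qm \<in> carrier_mat 3 3"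
    unfolding Pp_def Pm_def Qp_def Qm_def by simp_all
  note kk = k1[unfolded trace3[OF carr(1) carr(3) R]] k2[unfolded trace3[OF carr(1) carr(4) R]]
     k3[unfolded trace3[OF carr(2) carr(3) R]] k4[unfolded trace3[OF carr(2) carr(4) R]]
  have K: "Re (\<rho>$$(0,0)) = Re (\<rho>$$(2,2))" using kk R H(6) unfolding Pp_def Pm_def Qp_def Qm_def sq_def
    by (simp add: sum3' mult3 del: index_mult_mat)
  have d3: "dim_row (J3 * \<rho>) = 3" unfolding J3_M3 by simp
  have T: "mtrace (J3 * \<rho>) = \<rho>$$(0,0) - \<rho>$$(2,2)"
    unfolding mtrace_def d3 sum3' unfolding J3_M3
    by (simp add: mult3[OF M3_carrier R] del: index_mult_mat)
  show ?thesis unfolding T using K H(1) H(3) by (simp add: complex_eq_iff)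
qed

end
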